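(* Let $\mathcal G$ be a pseudogroup on a compact metric space $X$ with finite generating set $\mathcal G_1$. Then for every $x\in X$, $n\in\mathbb N$ and $\varepsilon>0$, the sets $B_n(x,\varepsilon)$, $B_n[x,\varepsilon]$ and $\Phi_\varepsilon(x)$ are Borel subsets of $X$.
   Context: $\mathrm{Homeo}(X)$: homeomorphisms $g:D_g\to R_g$ between open subsets of $X$, composed on natural domains $D_{h\circ g}=g^{-1}(D_h)$. A pseudogroup is a subset of $\mathrm{Homeo}(X)$ containing $\mathrm{id}_X$, closed under composition, inversion, restriction to open subsets, and gluing along open covers of the domain; $\mathcal G_1$ generates it if every element locally coincides with finite compositions of elements of $\mathcal G_1$ and their inverses. Let $\mathcal G_n=\{g_1\circ\cdots\circ g_n: g_i\in\mathcal G_1\}$, $\mathcal G_n^x=\{g\in\mathcal G_n: x\in D_g\}$, $B_n(x,\varepsilon)=\{y\in X: d(g(x),g(y))<\varepsilon\ \forall g\in\mathcal G_n^x\cap\mathcal G_n^y\}$, $B_n[x,\varepsilon]=\{y\in X: d(g(x),g(y))\le\varepsilon\ \forall g\in\mathcal G_n^x\cap\mathcal G_n^y\}$, and $\Phi_\varepsilon(x)=\bigcap_{n\in\mathbb N}B_n[x,\varepsilon]$. *)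

theory Defs
  imports "HOL-Analysis.Analysis"
begin

text \<open>A partial map on the space (UNIV of a metric-space type) is represented as a pair
  (domain, function), normalised to be the identity outside the domain so that
  equality of pairs is equality of partial maps.\<close>

type_synonym 'a pmap = "'a set \<times> ('a \<Rightarrow> 'a)"

definition pdom :: "'a pmap \<Rightarrow> 'a set" where "pdom g = fst g"
definition papp :: "'a pmap \<Rightarrow> 'a \<Rightarrow> 'a" where "papp g = snd g"

definition mkp :: "'a set \<Rightarrow> ('a \<Rightarrow> 'a) \<Rightarrow> 'a pmap" where
  "mkp D f = (D, \<lambda>x. if x \<in> D then f x else x)"

definition phomeo :: "'a::topological_space pmap \<Rightarrow> bool" where
  "phomeo g \<longleftrightarrow> open (pdom g) \<and> open (papp g ` pdom g)
     \<and> (\<exists>k. homeomorphism (pdom g) (papp g ` pdom g) (papp g) k)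
     \<and> (\<forall>x. x \<notin> pdom g \<longrightarrow> papp g x = x)"

definition pid :: "'a pmap" where "pid = mkp UNIV id"

definition pcomp :: "'a pmap \<Rightarrow> 'a pmap \<Rightarrow> 'a pmap" where
  "pcomp h g = mkp {x \<in> pdom g. papp g x \<in> pdom h} (\<lambda>x. papp h (papp g x))"

definition pinv :: "'a pmap \<Rightarrow> 'a pmap" where
  "pinv g = mkp (papp g ` pdom g) (inv_into (pdom g) (papp g))"

definition prestr :: "'a pmap \<Rightarrow> 'a set \<Rightarrow> 'a pmap" where
  "prestr g U = mkp (pdom g \<inter> U) (papp g)"

definition pseudogroup :: "'a::topological_space pmap set \<Rightarrow> bool" where
  "pseudogroup P \<longleftrightarrow>
     (\<forall>g\<in>P. phomeo g) \<and> pid \<in> P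
     \<and> (\<forall>g\<in>P. \<forall>h\<in>P. pcomp h g \<in> P)
     \<and> (\<forall>g\<in>P. pinv g \<in> P)
     \<and> (\<forall>g\<in>P. \<forall>U. open U \<longrightarrow> prestr g U \<in> P)
     \<and> (\<forall>g. phomeo g \<and> (\<forall>x\<in>pdom g. \<exists>U. open U \<and> x \<in> U \<and> prestr g U \<in> P) \<longrightarrow> g \<in> P)"

fun pcomp_list :: "'a pmap list \<Rightarrow> 'a pmap" where
  "pcomp_list [] = pid"
| "pcomp_list (g # gs) = pcomp g (pcomp_list gs)"

definition generates :: "'a::topological_space pmap set \<Rightarrow> 'a pmap set \<Rightarrow> bool" where
  "generates G1 P \<longleftrightarrow> G1 \<subseteq> P \<and>
     (\<forall>g\<in>P. \<forall>x\<in>pdom g. \<exists>U ws. open U \<and> x \<in> U \<and> U \<subseteq> pdom g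
        \<and> set ws \<subseteq> G1 \<union> pinv ` G1
        \<and> U \<subseteq> pdom (pcomp_list ws)
        \<and> (\<forall>y\<in>U. papp (pcomp_list ws) y = papp g y))"

definition Gn :: "'a pmap set \<Rightarrow> nat \<Rightarrow> 'a pmap set" where
  "Gn G1 n = {pcomp_list gs | gs. set gs \<subseteq> G1 \<and> length gs = n}"

definition Bn_open :: "'a::metric_space pmap set \<Rightarrow> nat \<Rightarrow> 'a \<Rightarrow> real \<Rightarrow> 'a set" where
  "Bn_open G1 n x \<epsilon> = {y. \<forall>g\<in>Gn G1 n. x \<in> pdom g \<and> y \<in> pdom g
       \<longrightarrow> dist (papp g x) (papp g y) < \<epsilon>}"

definition Bn_closed :: "'a::metric_space pmap set \<Rightarrow> nat \<Rightarrow> 'a \<Rightarrow> real \<Rightarrow> 'a set" where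
  "Bn_closed G1 n x \<epsilon> = {y. \<forall>g\<in>Gn G1 n. x \<in> pdom g \<and> y \<in> pdom g
       \<longrightarrow> dist (papp g x) (papp g y) \<le> \<epsilon>}"

definition Phi :: "'a::metric_space pmap set \<Rightarrow> real \<Rightarrow> 'a \<Rightarrow> 'a set" where
  "Phi G1 \<epsilon> x = (\<Inter>n\<in>{1..}. Bn_closed G1 n x \<epsilon>)"

end

theory Submission
  imports Defs
begin

lemma pcl_in:
  assumes "pseudogroup P" "set gs \<subseteq> P" shows "pcomp_list gs \<in> P"
  using assms(2)
proof (induction gs)
  case Nil then show ?case using assms(1)[unfolded pseudogroup_def, THEN conjunct2, THEN conjunct1] by simp
next
  case (Cons g gs)
  have "\<forall>g\<in>P. \<forall>h\<in>P. pcomp h g \<in> P" using assms(1)[unfolded pseudogroup_def, THEN conjunct2, THEN conjunct2, THEN conjunct1] .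
  then show ?case using Cons by simp
qed

lemma ph_cont:
  assumes "phomeo g" shows "open (pdom g)" "continuous_on (pdom g) (papp g)"
  using assms unfolding phomeo_def homeomorphism_def by auto

lemma set_borel_lt:
  fixes g :: "'a::metric_space pmap" and R :: "real \<Rightarrow> real \<Rightarrow> bool"
  assumes "phomeo g" and R: "closed {t. R t e} \<or> open {t. R t e}"
  shows "{y. x \<in> pdom g \<and> y \<in> pdom g \<longrightarrow> R (dist (papp g x) (papp g y)) e} \<in> sets borel"
proof -
  let ?D = "pdom g"
  let ?h = "\<lambda>y. dist (papp g x) (papp g y)"
  have oD: "open ?D" and c: "continuous_on ?D (papp g)" using ph_cont[OF assms(1)] by auto
  have ch: "continuous_on ?D ?h" by (rule continuous_on_dist[OF continuous_on_const c])
  have A: "?D \<inter> ?h -` {t. R t e} \<in> sets borel"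
    using R
  proof
    assume "closed {t. R t e}"
    then have "closedin (top_of_set ?D) (?D \<inter> ?h -` {t. R t e})"
      by (rule continuous_closedin_preimage[OF ch])
    then obtain C where C: "closed C" "?D \<inter> ?h -` {t. R t e} = ?D \<inter> C"
      unfolding closedin_closed by blast
    have "?D \<inter> C \<in> sets borel" using oD C(1) by (intro sets.Int borel_open borel_closed)
    then show ?thesis unfolding C(2) .
  next
    assume "open {t. R t e}"
    then have "openin (top_of_set ?D) (?D \<inter> ?h -` {t. R t e})"
      by (rule continuous_openin_preimage_gen[OF ch])
    then obtain C where C: "open C" "?D \<inter> ?h -` {t. R t e} = ?D \<inter> C"
      unfolding openin_open by blast
    have "?D \<inter> C \<in> sets borel" using oD C(1) by (intro sets.Int borel_open)
    then show ?thesis unfolding C(2) .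
  qed
  show ?thesis
  proof (cases "x \<in> ?D")
    case True
    then have "{y. x \<in> pdom g \<and> y \<in> pdom g \<longrightarrow> R (?h y) e} = (- ?D) \<union> (?D \<inter> ?h -` {t. R t e})"
      by blast
    moreover have "(- ?D) \<union> (?D \<inter> ?h -` {t. R t e}) \<in> sets borel"
      by (intro sets.Un borel_closed closed_Compl oD A)
    ultimately show ?thesis by simp
  next
    case False then show ?thesis by simp
  qed
qed

lemma Gn_finite: "finite G1 \<Longrightarrow> finite (Gn G1 n)"
proof -
  assume f: "finite G1"
  have "Gn G1 n = pcomp_list ` {gs. set gs \<subseteq> G1 \<and> length gs = n}"
    unfolding Gn_def by blast
  then show ?thesis using finite_lists_length_eq[OF f] by simp
qed

lemma Gn_ph: assumes "pseudogroup P" "G1 \<subseteq> P" "g \<in> Gn G1 n" shows "phomeo g"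
proof -
  obtain gs where "g = pcomp_list gs" "set gs \<subseteq> G1" using assms(3) unfolding Gn_def by blast
  then have "set gs \<subseteq> P" using assms(2) by blast
  then have "g \<in> P" using pcl_in[OF assms(1)] \<open>g = pcomp_list gs\<close> by simp
  moreover have "\<forall>g\<in>P. phomeo g" using assms(1)[unfolded pseudogroup_def, THEN conjunct1] .
  ultimately show ?thesis by blast
qed

theorem mainTheorem4:
  fixes P G1 :: "'a::metric_space pmap set"
  assumes "compact (UNIV :: 'a set)"
    and "pseudogroup P"
    and "finite G1"
    and "generates G1 P"
  shows "\<forall>x n \<epsilon>. n \<ge> 1 \<and> \<epsilon> > 0 \<longrightarrow>
           Bn_open G1 n x \<epsilon> \<in> sets borel \<and> Bn_closed G1 n x \<epsilon> \<in> sets borel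
           \<and> Phi G1 \<epsilon> x \<in> sets borel"
proof -
  have sub: "G1 \<subseteq> P" using assms(4) by (simp add: generates_def)
  have BC: "Bn_closed G1 n x e \<in> sets borel" for n x e
  proof -
    have "Bn_closed G1 n x e = (\<Inter>g\<in>Gn G1 n. {y. x \<in> pdom g \<and> y \<in> pdom g \<longrightarrow> (\<lambda>a b. a \<le> b) (dist (papp g x) (papp g y)) e})"
      unfolding Bn_closed_def by blast
    also have "\<dots> \<in> sets borel"
      using Gn_finite[OF assms(3)] Gn_ph[OF assms(2) sub]
      by (intro sets.countable_INT'' set_borel_lt countable_finite) (simp_all add: closed_Collect_le)
    finally show ?thesis .
  qed
  have BO: "Bn_open G1 n x e \<in> sets borel" for n x e
  proof -
    have "Bn_open G1 n x e = (\<Inter>g\<in>Gn G1 n. {y. x \<in> pdom g \<and> y \<in> pdom g \<longrightarrow> (\<lambda>a b. a < b) (dist (papp g x) (papp g y)) e})"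
      unfolding Bn_open_def by blast
    also have "\<dots> \<in> sets borel"
      using Gn_finite[OF assms(3)] Gn_ph[OF assms(2) sub]
      by (intro sets.countable_INT'' set_borel_lt countable_finite) (simp_all add: open_Collect_less)
    finally show ?thesis .
  qed
  have PH: "Phi G1 e x \<in> sets borel" for e x
    unfolding Phi_def using BC by (intro sets.countable_INT'') simp_all
  show ?thesis using BC BO PH by blast
qed

end
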